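(* Let $d_1,d_2,d_3\ge2$, $A\in\mathbb{R}^{d_1\times d_2}_{>0}$ and $B\in\mathbb{R}^{d_2\times d_3}_{>0}$ (all entries strictly positive). Then \[ R(AB)\le \Phi\bigl(R(A),R(B)\bigr). \]
   Context: For a matrix $A=(a_{ik})\in\mathbb{R}^{d_1\times d_2}$ with strictly positive entries, its distortion is $R(A)=\max_{1\le i,j\le d_1,\ 1\le k,\ell\le d_2}\frac{a_{ik}a_{j\ell}}{a_{i\ell}a_{jk}}$ (so $R(A)\ge1$). The envelope function is $\Phi(\alpha,\beta)=\left(\frac{1+\sqrt{\alpha\beta}}{\sqrt{\alpha}+\sqrt{\beta}}\right)^2$ for $\alpha,\beta\ge1$. *)

theory Defs
  imports "HOL-Analysis.Analysis"
begin

text \<open>Matrices A in R^(d1 x d2) are represented as real^'d2^'d1 (rows indexed by 'd1,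
  columns by 'd2); A $ i $ k is the entry a_ik.\<close>

definition pos_matrix :: "real^'n^'m \<Rightarrow> bool" where
  "pos_matrix A \<longleftrightarrow> (\<forall>i k. A $ i $ k > 0)"

definition distortion :: "real^'n^'m \<Rightarrow> real" where
  "distortion A = Max {(A $ i $ k * A $ j $ l) / (A $ i $ l * A $ j $ k) | i j k l. True}"

definition envelope :: "real \<Rightarrow> real \<Rightarrow> real" where
  "envelope \<alpha> \<beta> = ((1 + sqrt (\<alpha> * \<beta>)) / (sqrt \<alpha> + sqrt \<beta>))^2"

end

theory Submission
  imports Defs
begin

lemma key:
  fixes a b c d K \<alpha> \<beta> :: real
  assumes "\<alpha> \<ge> 1" "\<beta> \<ge> 1" "a \<ge> 0" "b \<ge> 0" "c \<ge> 0" "d \<ge> 0"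
    "a + \<alpha> * b = \<alpha> - 1" "c + \<beta> * d = \<beta> - 1" "b * c > K" "a * d > K"
    "K = (\<alpha>-1)*(\<beta>-1)/(sqrt \<alpha> + sqrt \<beta>)^2"
  shows False
proof -
  define s t where "s = sqrt \<alpha>" and "t = sqrt \<beta>"
  have s1: "s \<ge> 1" "t \<ge> 1" using assms(1,2) by (auto simp: s_def t_def)
  have al: "\<alpha> = s^2" "\<beta> = t^2" using assms(1,2) by (auto simp: s_def t_def)
  have K0: "K \<ge> 0" using assms(1,2,11) by simp
  have pos: "a > 0" "b > 0" "c > 0" "d > 0" using assms(3-6,9,10) K0
    by (metis less_eq_real_def mult_eq_0_iff order.strict_trans2 mult_zero_left mult_zero_right)+
  have cK: "c > K / b" using assms(9) pos by (simp add: field_simps mult.commute)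
  have dK: "d > K / a" using assms(10) pos by (simp add: field_simps mult.commute)
  have "\<beta> - 1 > K / b + \<beta> * (K / a)" using cK dK assms(8) assms(2)
    by (smt (verit) mult_left_mono mult_strict_left_mono)
  hence lt: "\<beta> - 1 > K * (1/b + \<beta>/a)" by (simp add: field_simps)
  have amgm: "a/b + \<alpha>*\<beta>*(b/a) \<ge> 2 * (s*t)"
  proof -
    have "0 \<le> (a - s*t*b)^2" by simp
    hence "2*(s*t)*(a*b) \<le> a*a + (s*t)^2*(b*b)" by (simp add: power2_eq_square algebra_simps)
    hence "2*(s*t) \<le> (a*a + (s*t)^2*(b*b))/(a*b)" using pos by (simp add: field_simps)
    also have "\<dots> = a/b + \<alpha>*\<beta>*(b/a)" using pos al by (simp add: field_simps power2_eq_square)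
    finally show ?thesis .
  qed
  have "(1/b + \<beta>/a) * (a + \<alpha>*b) = a/b + \<alpha>*\<beta>*(b/a) + \<alpha> + \<beta>" using pos by (simp add: field_simps)
  hence "(1/b + \<beta>/a) * (\<alpha> - 1) = a/b + \<alpha>*\<beta>*(b/a) + \<alpha> + \<beta>" using assms(7) by simp
  moreover have "(s+t)^2 = 2*(s*t) + \<alpha> + \<beta>" using al by (simp add: power2_eq_square algebra_simps)
  ultimately have cs: "(1/b + \<beta>/a) * (\<alpha> - 1) \<ge> (s+t)^2" using amgm by linarith
  have st: "(s+t)^2 > 0" using s1 by simp
  have "K * (1/b + \<beta>/a) * (\<alpha> - 1) \<ge> K * (s+t)^2" using cs K0
    by (metis mult.assoc mult_left_mono)
  also have "K * (s+t)^2 = (\<alpha>-1)*(\<beta>-1)" using assms(11) st by (simp add: s_def t_def)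
  finally have "K * (1/b + \<beta>/a) * (\<alpha> - 1) \<ge> (\<beta>-1)*(\<alpha>-1)" by (simp add: mult.commute)
  moreover have "\<alpha> - 1 > 0" using pos assms(7) by (smt (verit) mult_nonneg_nonneg assms(1) assms(4))
  ultimately have "K * (1/b + \<beta>/a) \<ge> \<beta> - 1" by simp
  thus False using lt by simp
qed

lemma env_minus1:
  fixes \<alpha> \<beta> :: real assumes "\<alpha> \<ge> 1" "\<beta> \<ge> 1"
  shows "envelope \<alpha> \<beta> - 1 = (\<alpha>-1)*(\<beta>-1)/(sqrt \<alpha> + sqrt \<beta>)^2"
proof -
  define s t where "s = sqrt \<alpha>" and "t = sqrt \<beta>"
  have s1: "s \<ge> 1" "t \<ge> 1" using assms by (auto simp: s_def t_def)
  have al: "\<alpha> = s^2" "\<beta> = t^2" using assms by (auto simp: s_def t_def)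
  have sq: "sqrt (\<alpha>*\<beta>) = s*t" by (simp add: s_def t_def real_sqrt_mult)
  have "s + t > 0" using s1 by simp
  hence d: "(s+t)^2 \<noteq> 0" by simp
  have "((1 + s*t)/(s+t))^2 - 1 = ((1+s*t)^2 - (s+t)^2)/(s+t)^2"
    using d by (simp add: power_divide diff_divide_distrib)
  also have "(1+s*t)^2 - (s+t)^2 = (s^2-1)*(t^2-1)" by (simp add: power2_eq_square algebra_simps)
  finally have "((1 + s*t)/(s+t))^2 - 1 = (s^2-1)*(t^2-1)/(s+t)^2" .
  thus ?thesis unfolding envelope_def sq s_def[symmetric] t_def[symmetric] by (simp add: al)
qed

lemma scalar:
  fixes \<alpha> \<beta> R S T :: real
  assumes "\<alpha> \<ge> 1" "\<beta> \<ge> 1" "1 \<le> R" "R \<le> \<alpha>" "1 \<le> S" "S \<le> \<beta>"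
    "T \<le> \<beta>*R + S - \<beta>" "T \<le> R + \<alpha>*S - \<alpha>"
  shows "T \<le> envelope \<alpha> \<beta> * R * S"
proof (rule ccontr)
  assume "\<not> ?thesis"
  hence H: "T > envelope \<alpha> \<beta> * R * S" by simp
  define K where "K = envelope \<alpha> \<beta> - 1"
  have Ke: "K = (\<alpha>-1)*(\<beta>-1)/(sqrt \<alpha> + sqrt \<beta>)^2" using env_minus1 assms K_def by simp
  have RS: "R > 0" "S > 0" using assms by auto
  have e1: "(R-1)*(\<beta>-S) > K*R*S" using H assms(7) unfolding K_def by (simp add: algebra_simps)
  have e2: "(S-1)*(\<alpha>-R) > K*R*S" using H assms(8) unfolding K_def by (simp add: algebra_simps)
  show False
  proof (rule key[of \<alpha> \<beta> "(\<alpha>-R)/R" "(R-1)/R" "(\<beta>-S)/S" "(S-1)/S" K])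
    show "(\<alpha> - R) / R + \<alpha> * ((R - 1) / R) = \<alpha> - 1" using RS by (simp add: field_simps)
    show "(\<beta> - S) / S + \<beta> * ((S - 1) / S) = \<beta> - 1" using RS by (simp add: field_simps)
    have "K < (R-1)*(\<beta>-S)/(R*S)" using e1 RS by (simp add: less_divide_eq mult.assoc)
    thus "K < (R - 1) / R * ((\<beta> - S) / S)" by simp
    have "K < (S-1)*(\<alpha>-R)/(R*S)" using e2 RS by (simp add: less_divide_eq mult.assoc)
    thus "K < (\<alpha> - R) / R * ((S - 1) / S)" by (simp add: mult.commute)
    show "0 \<le> (\<alpha> - R) / R" using assms RS by simp
    show "0 \<le> (R - 1) / R" using assms RS by simp
    show "0 \<le> (\<beta> - S) / S" using assms RS by simp
    show "0 \<le> (S - 1) / S" using assms RS by simp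
  qed (use assms Ke in simp_all)
qed

lemma scalar_hom:
  fixes \<alpha> \<beta> W P Q T :: real
  assumes "\<alpha> \<ge> 1" "\<beta> \<ge> 1" "W > 0" "W \<le> P" "P \<le> \<alpha>*W" "W \<le> Q" "Q \<le> \<beta>*W"
    "T \<le> \<beta>*P + Q - \<beta>*W" "T \<le> P + \<alpha>*Q - \<alpha>*W"
  shows "W*T \<le> envelope \<alpha> \<beta> * P * Q"
proof -
  have W: "W > 0" by fact
  have 1: "1 \<le> P/W" "P/W \<le> \<alpha>" "1 \<le> Q/W" "Q/W \<le> \<beta>"
    using assms W by (simp_all add: le_divide_eq divide_le_eq)
  have "T/W \<le> (\<beta>*P + Q - \<beta>*W)/W" using assms(8) W by (simp add: divide_right_mono)
  also have "\<dots> = \<beta>*(P/W) + Q/W - \<beta>" using W by (simp add: diff_divide_distrib add_divide_distrib)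
  finally have 2: "T/W \<le> \<beta>*(P/W) + Q/W - \<beta>" .
  have "T/W \<le> (P + \<alpha>*Q - \<alpha>*W)/W" using assms(9) W by (simp add: divide_right_mono)
  also have "\<dots> = P/W + \<alpha>*(Q/W) - \<alpha>" using W by (simp add: diff_divide_distrib add_divide_distrib)
  finally have 3: "T/W \<le> P/W + \<alpha>*(Q/W) - \<alpha>" .
  have "T/W \<le> envelope \<alpha> \<beta> * (P/W) * (Q/W)"
    using scalar[OF assms(1,2) 1 2 3] .
  hence "W*W*(T/W) \<le> W*W*(envelope \<alpha> \<beta> * (P/W) * (Q/W))" by (rule mult_left_mono) (use W in simp)
  moreover have "W*W*(T/W) = W*T" using W by simp
  moreover have "W*W*(envelope \<alpha> \<beta> * (P/W) * (Q/W)) = envelope \<alpha> \<beta> * P * Q"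
    using W by (simp add: divide_simps)
  ultimately show ?thesis by simp
qed

lemma dist_fin:
  fixes A :: "real^'n^'m"
  shows "finite {(A $ i $ k * A $ j $ l) / (A $ i $ l * A $ j $ k) | i j k l. True}"
proof (rule finite_subset)
  show "{(A $ i $ k * A $ j $ l) / (A $ i $ l * A $ j $ k) | i j k l. True}
     \<subseteq> (\<lambda>(i,j,k,l). A $ i $ k * A $ j $ l / (A $ i $ l * A $ j $ k)) ` UNIV"
    by (auto simp: image_def)
qed simp

lemma dist_ge:
  fixes A :: "real^'n^'m"
  shows "A $ i $ k * A $ j $ l / (A $ i $ l * A $ j $ k) \<le> distortion A"
  unfolding distortion_def by (rule Max_ge[OF dist_fin]) blast

lemma dist_in:
  fixes A :: "real^'n^'m"
  shows "\<exists>i j k l. distortion A = A $ i $ k * A $ j $ l / (A $ i $ l * A $ j $ k)"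
proof -
  have "distortion A \<in> {(A $ i $ k * A $ j $ l) / (A $ i $ l * A $ j $ k) | i j k l. True}"
    unfolding distortion_def by (rule Max_in[OF dist_fin]) blast
  thus ?thesis by blast
qed

lemma dist_ge1:
  fixes A :: "real^'n^'m"
  assumes "pos_matrix A"
  shows "1 \<le> distortion A"
proof -
  obtain i :: 'm and k :: 'n where True by simp
  have "A $ i $ k * A $ i $ k / (A $ i $ k * A $ i $ k) = 1"
    using assms unfolding pos_matrix_def by (metis divide_self less_irrefl mult_pos_pos)
  thus ?thesis using dist_ge[of A i k i k] by simp
qed

lemma argmin_ex:
  fixes g :: "'a::finite \<Rightarrow> real"
  shows "\<exists>p. \<forall>m. g p \<le> g m"
proof -
  have "Min (range g) \<in> range g" by (rule Min_in) auto
  then obtain p where "g p = Min (range g)" by (metis rangeE)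
  thus ?thesis by (intro exI[of _ p] allI) (simp add: Min_le)
qed

lemma entry_bound:
  fixes A :: "real^'d2^'d1" and B :: "real^'d3^'d2"
  assumes PA: "pos_matrix A" and PB: "pos_matrix B"
  shows "(A**B)$i$k * (A**B)$j$l / ((A**B)$i$l * (A**B)$j$k) \<le> envelope (distortion A) (distortion B)"
proof -
  define \<alpha> where "\<alpha> = distortion A"
  define \<beta> where "\<beta> = distortion B"
  have a1: "\<alpha> \<ge> 1" using dist_ge1[OF PA] by (simp add: \<alpha>_def)
  have b1: "\<beta> \<ge> 1" using dist_ge1[OF PB] by (simp add: \<beta>_def)
  define x where "x m = A$i$m" for m
  define y where "y m = A$j$m" for m
  define u where "u m = B$m$k" for m
  define v where "v m = B$m$l" for m
  have xp: "x m > 0" "y m > 0" "u m > 0" "v m > 0" for m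
    using PA PB unfolding pos_matrix_def x_def y_def u_def v_def by auto
  obtain p where p: "\<forall>m. y p / x p \<le> y m / x m" using argmin_ex[of "\<lambda>m. y m / x m"] by auto
  obtain q where q: "\<forall>m. v q / u q \<le> v m / u m" using argmin_ex[of "\<lambda>m. v m / u m"] by auto
  define R where "R m = (y m * x p) / (x m * y p)" for m
  define S where "S m = (v m * u q) / (u m * v q)" for m
  define c1 where "c1 = y p / x p"
  define c2 where "c2 = v q / u q"
  define w where "w m = x m * u m" for m
  have c1p: "c1 > 0" and c2p: "c2 > 0" using xp by (auto simp: c1_def c2_def)
  have wp: "w m > 0" for m using xp by (simp add: w_def)
  have R1: "1 \<le> R m" for m
  proof -
    have "y p / x p \<le> y m / x m" using p by blast
    hence "y p * x m \<le> y m * x p" using xp by (simp add: divide_simps)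
    thus ?thesis unfolding R_def using xp by (simp add: divide_simps mult.commute)
  qed
  have S1: "1 \<le> S m" for m
  proof -
    have "v q / u q \<le> v m / u m" using q by blast
    hence "v q * u m \<le> v m * u q" using xp by (simp add: divide_simps)
    thus ?thesis unfolding S_def using xp by (simp add: divide_simps mult.commute)
  qed
  have R2: "R m \<le> \<alpha>" for m
  proof -
    have "A $ j $ m * A $ i $ p / (A $ j $ p * A $ i $ m) \<le> \<alpha>" unfolding \<alpha>_def by (rule dist_ge)
    thus ?thesis unfolding R_def x_def y_def by (simp add: mult.commute)
  qed
  have S2: "S m \<le> \<beta>" for m
  proof -
    have "B $ m $ l * B $ q $ k / (B $ m $ k * B $ q $ l) \<le> \<beta>" unfolding \<beta>_def by (rule dist_ge)
    thus ?thesis unfolding S_def u_def v_def by (simp add: mult.commute)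
  qed
  have yR: "y m = c1 * R m * x m" for m using xp[of p] xp[of m] unfolding R_def c1_def by (simp add: field_simps)
  have vS: "v m = c2 * S m * u m" for m using xp[of q] xp[of m] unfolding S_def c2_def by (simp add: field_simps)
  define W where "W = (\<Sum>m\<in>UNIV. w m)"
  define P where "P = (\<Sum>m\<in>UNIV. w m * R m)"
  define Q where "Q = (\<Sum>m\<in>UNIV. w m * S m)"
  define T where "T = (\<Sum>m\<in>UNIV. w m * R m * S m)"
  have e1: "(A**B)$i$k = W" unfolding W_def w_def x_def u_def by (simp add: matrix_matrix_mult_def)
  have e2: "(A**B)$j$l = c1 * c2 * T"
  proof -
    have "(A**B)$j$l = (\<Sum>m\<in>UNIV. y m * v m)" unfolding y_def v_def by (simp add: matrix_matrix_mult_def)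
    also have "\<dots> = (\<Sum>m\<in>UNIV. c1 * c2 * (w m * R m * S m))"
      by (rule sum.cong) (simp_all add: yR vS w_def algebra_simps)
    finally show ?thesis unfolding T_def by (simp add: sum_distrib_left)
  qed
  have e3: "(A**B)$i$l = c2 * Q"
  proof -
    have "(A**B)$i$l = (\<Sum>m\<in>UNIV. x m * v m)" unfolding x_def v_def by (simp add: matrix_matrix_mult_def)
    also have "\<dots> = (\<Sum>m\<in>UNIV. c2 * (w m * S m))"
      by (rule sum.cong) (simp_all add: vS w_def algebra_simps)
    finally show ?thesis unfolding Q_def by (simp add: sum_distrib_left)
  qed
  have e4: "(A**B)$j$k = c1 * P"
  proof -
    have "(A**B)$j$k = (\<Sum>m\<in>UNIV. y m * u m)" unfolding y_def u_def by (simp add: matrix_matrix_mult_def)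
    also have "\<dots> = (\<Sum>m\<in>UNIV. c1 * (w m * R m))"
      by (rule sum.cong) (simp_all add: yR w_def algebra_simps)
    finally show ?thesis unfolding P_def by (simp add: sum_distrib_left)
  qed
  have W0: "W > 0" unfolding W_def using wp by (simp add: sum_pos)
  have P1: "W \<le> P" unfolding W_def P_def
    by (rule sum_mono) (metis R1 wp less_imp_le mult.right_neutral mult_left_mono)
  have P2: "P \<le> \<alpha> * W" unfolding W_def P_def sum_distrib_left
    by (rule sum_mono) (use wp R2 in \<open>simp add: mult.commute mult_left_mono less_imp_le\<close>)
  have Q1: "W \<le> Q" unfolding W_def Q_def
    by (rule sum_mono) (metis S1 wp less_imp_le mult.right_neutral mult_left_mono)
  have Q2: "Q \<le> \<beta> * W" unfolding W_def Q_def sum_distrib_left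
    by (rule sum_mono) (use wp S2 in \<open>simp add: mult.commute mult_left_mono less_imp_le\<close>)
  have T1: "T \<le> \<beta>*P + Q - \<beta>*W"
  proof -
    have "T \<le> (\<Sum>m\<in>UNIV. \<beta>*(w m * R m) + w m * S m - \<beta> * w m)" unfolding T_def
    proof (rule sum_mono)
      fix m
      have "0 \<le> (R m - 1) * (\<beta> - S m)" using R1 S2 by simp
      hence "0 \<le> w m * ((R m - 1) * (\<beta> - S m))" using wp[of m] by (simp add: zero_le_mult_iff)
      thus "w m * R m * S m \<le> \<beta>*(w m * R m) + w m * S m - \<beta> * w m" by (simp add: algebra_simps)
    qed
    also have "\<dots> = \<beta>*P + Q - \<beta>*W" unfolding P_def Q_def W_def
      by (simp add: sum.distrib sum_subtractf sum_distrib_left)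
    finally show ?thesis .
  qed
  have T2: "T \<le> P + \<alpha>*Q - \<alpha>*W"
  proof -
    have "T \<le> (\<Sum>m\<in>UNIV. w m * R m + \<alpha>*(w m * S m) - \<alpha> * w m)" unfolding T_def
    proof (rule sum_mono)
      fix m
      have "0 \<le> (S m - 1) * (\<alpha> - R m)" using S1 R2 by simp
      hence "0 \<le> w m * ((S m - 1) * (\<alpha> - R m))" using wp[of m] by (simp add: zero_le_mult_iff)
      thus "w m * R m * S m \<le> w m * R m + \<alpha>*(w m * S m) - \<alpha> * w m" by (simp add: algebra_simps)
    qed
    also have "\<dots> = P + \<alpha>*Q - \<alpha>*W" unfolding P_def Q_def W_def
      by (simp add: sum.distrib sum_subtractf sum_distrib_left)
    finally show ?thesis .
  qed
  have main: "W*T \<le> envelope \<alpha> \<beta> * P * Q"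
    by (rule scalar_hom[OF a1 b1 W0 P1 P2 Q1 Q2 T1 T2])
  have PQ: "P > 0" "Q > 0" using W0 P1 Q1 by auto
  have "(A**B)$i$k * (A**B)$j$l / ((A**B)$i$l * (A**B)$j$k) = W * T / (P * Q)"
    unfolding e1 e2 e3 e4 using c1p c2p by (simp add: field_simps)
  also have "\<dots> \<le> envelope \<alpha> \<beta>" using main PQ by (simp add: divide_simps mult.assoc)
  finally show ?thesis by (simp add: \<alpha>_def \<beta>_def)
qed

theorem mainTheorem9:
  fixes A :: "real^'d2^'d1" and B :: "real^'d3^'d2"
  assumes "CARD('d1) \<ge> 2" and "CARD('d2) \<ge> 2" and "CARD('d3) \<ge> 2"
    and "pos_matrix A" and "pos_matrix B"
  shows "distortion (A ** B) \<le> envelope (distortion A) (distortion B)"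
proof -
  obtain i j k l where "distortion (A ** B) = (A**B)$i$k * (A**B)$j$l / ((A**B)$i$l * (A**B)$j$k)"
    using dist_in by blast
  thus ?thesis using entry_bound[OF assms(4,5)] by simp
qed

end
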